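(* Let $g$ be a blurred permutation on $[n]$ with associated partition $P_1,\dots,P_m$, and let $f$ be a multipermutation on $[n]$ that does not respect $g$. Then either $(f\circ g)\circ(g^{-1}\circ f^{-1})$ or $(f^{-1}\circ g^{-1})\circ(g\circ f)$ is a reflexive and symmetric multipermutation that is not a sub-multipermutation of $g$.
   Context: A multipermutation on $[n]$ is a map $f:[n]\to\mathcal{P}([n])\setminus\{\emptyset\}$ with every $y$ in some $f(x)$; $f^{-1}:x\mapsto\{y:x\in f(y)\}$; $(g\circ f)(x)=\{z:\exists y\,(y\in f(x)\wedge z\in g(y))\}$; $f$ is a sub-multipermutation of $h$ if $f(x)\subseteq h(x)$ for all $x$; symmetric means $a\in f(b)\iff b\in f(a)$, reflexive means $a\in f(a)$ for all $a$. A blurred permutation $g$ with associated partition $P_1,\dots,P_m$ is one for which there is a permutation $\sigma$ of $[m]$ ($m\le n$) with $i\in P_i$ for $i\in[m]$ and $g(x)=P_{\sigma(i)}$ for all $x\in P_i$. A multipermutation $f$ respects $g$ if neither (i) there exist $a,b$ in the same block $P_i$ and $c,d$ in distinct blocks with $c\in f(a)$, $d\in f(b)$, nor (ii) there exist $a,b$ in distinct blocks and $c,d$ in the same block with $c\in f(a)$, $d\in f(b)$. *)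

theory Defs
  imports "HOL-Combinatorics.Permutations"
begin

text \<open>A multipermutation on [n] = {1..n} is represented as a function nat => nat set;
  only its values on {1..n} matter.\<close>

definition multiperm :: "nat \<Rightarrow> (nat \<Rightarrow> nat set) \<Rightarrow> bool" where
  "multiperm n f \<longleftrightarrow>
     (\<forall>x\<in>{1..n}. f x \<noteq> {} \<and> f x \<subseteq> {1..n}) \<and>
     (\<forall>y\<in>{1..n}. \<exists>x\<in>{1..n}. y \<in> f x)"

definition minv :: "nat \<Rightarrow> (nat \<Rightarrow> nat set) \<Rightarrow> (nat \<Rightarrow> nat set)" where
  "minv n f = (\<lambda>x. {y\<in>{1..n}. x \<in> f y})"

definition mcomp :: "(nat \<Rightarrow> nat set) \<Rightarrow> (nat \<Rightarrow> nat set) \<Rightarrow> (nat \<Rightarrow> nat set)" where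
  "mcomp g f = (\<lambda>x. {z. \<exists>y. y \<in> f x \<and> z \<in> g y})"

definition submultiperm :: "nat \<Rightarrow> (nat \<Rightarrow> nat set) \<Rightarrow> (nat \<Rightarrow> nat set) \<Rightarrow> bool" where
  "submultiperm n f h \<longleftrightarrow> (\<forall>x\<in>{1..n}. f x \<subseteq> h x)"

definition msymmetric :: "nat \<Rightarrow> (nat \<Rightarrow> nat set) \<Rightarrow> bool" where
  "msymmetric n f \<longleftrightarrow> (\<forall>a\<in>{1..n}. \<forall>b\<in>{1..n}. a \<in> f b \<longleftrightarrow> b \<in> f a)"

definition mreflexive :: "nat \<Rightarrow> (nat \<Rightarrow> nat set) \<Rightarrow> bool" where
  "mreflexive n f \<longleftrightarrow> (\<forall>a\<in>{1..n}. a \<in> f a)"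

definition is_partition :: "nat \<Rightarrow> nat \<Rightarrow> (nat \<Rightarrow> nat set) \<Rightarrow> bool" where
  "is_partition n m P \<longleftrightarrow>
     (\<forall>i\<in>{1..m}. P i \<noteq> {}) \<and>
     (\<forall>i\<in>{1..m}. \<forall>j\<in>{1..m}. i \<noteq> j \<longrightarrow> P i \<inter> P j = {}) \<and>
     (\<Union>i\<in>{1..m}. P i) = {1..n}"

definition blurred :: "nat \<Rightarrow> (nat \<Rightarrow> nat set) \<Rightarrow> nat \<Rightarrow> (nat \<Rightarrow> nat set) \<Rightarrow> bool" where
  "blurred n g m P \<longleftrightarrow>
     multiperm n g \<and> m \<le> n \<and> is_partition n m P \<and>
     (\<forall>i\<in>{1..m}. i \<in> P i) \<and>
     (\<exists>\<sigma>. \<sigma> permutes {1..m} \<and> (\<forall>i\<in>{1..m}. \<forall>x\<in>P i. g x = P (\<sigma> i)))"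

definition same_block :: "nat \<Rightarrow> (nat \<Rightarrow> nat set) \<Rightarrow> nat \<Rightarrow> nat \<Rightarrow> bool" where
  "same_block m P a b \<longleftrightarrow> (\<exists>i\<in>{1..m}. a \<in> P i \<and> b \<in> P i)"

definition mrespects :: "nat \<Rightarrow> (nat \<Rightarrow> nat set) \<Rightarrow> nat \<Rightarrow> (nat \<Rightarrow> nat set) \<Rightarrow> bool" where
  "mrespects n f m P \<longleftrightarrow>
     \<not> (\<exists>a\<in>{1..n}. \<exists>b\<in>{1..n}. \<exists>c\<in>{1..n}. \<exists>d\<in>{1..n}.
          same_block m P a b \<and> \<not> same_block m P c d \<and> c \<in> f a \<and> d \<in> f b) \<and>
     \<not> (\<exists>a\<in>{1..n}. \<exists>b\<in>{1..n}. \<exists>c\<in>{1..n}. \<exists>d\<in>{1..n}.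
          \<not> same_block m P a b \<and> same_block m P c d \<and> c \<in> f a \<and> d \<in> f b)"

end

theory Submission
  imports Defs
begin

lemma bl_blk: "blurred n g m P \<Longrightarrow> x \<in> {1..n} \<Longrightarrow> \<exists>i\<in>{1..m}. x \<in> P i"
  unfolding blurred_def is_partition_def by blast

lemma bl_uniq: "blurred n g m P \<Longrightarrow> i\<in>{1..m} \<Longrightarrow> j\<in>{1..m} \<Longrightarrow> x\<in>P i \<Longrightarrow> x\<in>P j \<Longrightarrow> i=j"
  unfolding blurred_def is_partition_def by blast

lemma bl_sig: "blurred n g m P \<Longrightarrow> \<exists>\<sigma>. (\<forall>i\<in>{1..m}. \<sigma> i \<in> {1..m}) \<and> (\<forall>i\<in>{1..m}. \<forall>x\<in>P i. g x = P (\<sigma> i))"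
  unfolding blurred_def by (metis permutes_in_image)

lemma bl_same_g: "blurred n g m P \<Longrightarrow> same_block m P a b \<Longrightarrow> g a = g b"
  unfolding same_block_def using bl_sig by metis

lemma bl_refl_blocks:
  assumes b: "blurred n g m P" and r: "\<forall>x\<in>{1..n}. x \<in> g x" and x: "x \<in> {1..n}" and y: "y \<in> g x"
  shows "same_block m P x y"
proof -
  obtain \<sigma> where s1: "\<forall>i\<in>{1..m}. \<sigma> i \<in> {1..m}" and s2: "\<forall>i\<in>{1..m}. \<forall>x\<in>P i. g x = P (\<sigma> i)"
    using bl_sig[OF b] by blast
  obtain i where i: "i \<in> {1..m}" "x \<in> P i" using bl_blk[OF b x] by blast
  have gx: "g x = P (\<sigma> i)" using s2 i by blast
  have "x \<in> P (\<sigma> i)" using r x gx by blast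
  hence "\<sigma> i = i" using bl_uniq[OF b] s1 i by blast
  thus ?thesis using gx y i unfolding same_block_def by auto
qed

lemma mp_props:
  assumes "multiperm n f"
  shows "\<And>x. x\<in>{1..n} \<Longrightarrow> \<exists>y\<in>{1..n}. y \<in> f x" "\<And>x. x\<in>{1..n} \<Longrightarrow> f x \<subseteq> {1..n}"
    "\<And>y. y\<in>{1..n} \<Longrightarrow> \<exists>x\<in>{1..n}. y \<in> f x"
  using assms unfolding multiperm_def by blast+

lemma h1_props:
  assumes f: "multiperm n f" and g: "multiperm n g"
  defines "h \<equiv> mcomp (mcomp f g) (mcomp (minv n g) (minv n f))"
  shows "multiperm n h \<and> mreflexive n h \<and> msymmetric n h"
proof -
  have mem: "\<And>x y. y \<in> h x \<longleftrightarrow> (\<exists>a b c. a\<in>{1..n} \<and> b\<in>{1..n} \<and> x \<in> f a \<and> a \<in> g b \<and> c \<in> g b \<and> y \<in> f c)"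
    unfolding h_def mcomp_def minv_def by auto
  have refl: "\<And>x. x\<in>{1..n} \<Longrightarrow> x \<in> h x"
  proof -
    fix x assume x: "x\<in>{1..n}"
    obtain a where a: "a\<in>{1..n}" "x \<in> f a" using mp_props(3)[OF f x] by blast
    obtain b where b: "b\<in>{1..n}" "a \<in> g b" using mp_props(3)[OF g a(1)] by blast
    show "x \<in> h x" using mem a b by blast
  qed
  have sub: "\<And>x. x\<in>{1..n} \<Longrightarrow> h x \<subseteq> {1..n}"
  proof
    fix x y assume x: "x\<in>{1..n}" and "y \<in> h x"
    then obtain a b c where "a\<in>{1..n}" "b\<in>{1..n}" "c \<in> g b" "y \<in> f c" using mem by blast
    thus "y \<in> {1..n}" using mp_props(2)[OF g] mp_props(2)[OF f] by blast
  qed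
  have sym: "\<And>x y. y \<in> h x \<Longrightarrow> x \<in> h y"
  proof -
    fix x y assume "y \<in> h x"
    then obtain a b c where "a\<in>{1..n}" "b\<in>{1..n}" "x \<in> f a" "a \<in> g b" "c \<in> g b" "y \<in> f c"
      using mem by blast
    moreover have "c \<in> {1..n}" using mp_props(2)[OF g \<open>b\<in>{1..n}\<close>] \<open>c \<in> g b\<close> by blast
    ultimately show "x \<in> h y" using mem[of x y] by blast
  qed
  have A: "\<forall>x\<in>{1..n}. h x \<noteq> {} \<and> h x \<subseteq> {1..n}" using refl sub by blast
  have B: "\<forall>y\<in>{1..n}. \<exists>x\<in>{1..n}. y \<in> h x" using refl by blast
  show ?thesis unfolding multiperm_def mreflexive_def msymmetric_def
    using A B refl sym by blast
qed

lemma h2_props: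
  assumes f: "multiperm n f" and g: "multiperm n g"
  defines "h \<equiv> mcomp (mcomp (minv n f) (minv n g)) (mcomp g f)"
  shows "multiperm n h \<and> mreflexive n h \<and> msymmetric n h"
proof -
  have mem2: "\<And>x y. y \<in> h x \<longleftrightarrow> (\<exists>a b c. y\<in>{1..n} \<and> c\<in>{1..n} \<and> a \<in> f x \<and> b \<in> g a \<and> b \<in> g c \<and> c \<in> f y)"
    unfolding h_def mcomp_def minv_def by auto
  have refl: "\<And>x. x\<in>{1..n} \<Longrightarrow> x \<in> h x"
  proof -
    fix x assume x: "x\<in>{1..n}"
    obtain a where a: "a\<in>{1..n}" "a \<in> f x" using mp_props(1)[OF f x] by blast
    obtain b where b: "b\<in>{1..n}" "b \<in> g a" using mp_props(1)[OF g a(1)] by blast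
    show "x \<in> h x" using mem2 a b x by blast
  qed
  have sub: "\<And>x. h x \<subseteq> {1..n}" using mem2 by blast
  have sym: "\<And>x y. x\<in>{1..n} \<Longrightarrow> y\<in>{1..n} \<Longrightarrow> y \<in> h x \<Longrightarrow> x \<in> h y"
  proof -
    fix x y assume x: "x\<in>{1..n}" and y: "y\<in>{1..n}" and "y \<in> h x"
    then obtain a b c where "c\<in>{1..n}" "a \<in> f x" "b \<in> g a" "b \<in> g c" "c \<in> f y" using mem2 by blast
    moreover have "a \<in> {1..n}" using mp_props(2)[OF f x] \<open>a \<in> f x\<close> by blast
    ultimately show "x \<in> h y" using mem2 x by blast
  qed
  have A: "\<forall>x\<in>{1..n}. h x \<noteq> {} \<and> h x \<subseteq> {1..n}" using refl sub by blast
  have B: "\<forall>y\<in>{1..n}. \<exists>x\<in>{1..n}. y \<in> h x" using refl by blast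
  show ?thesis unfolding multiperm_def mreflexive_def msymmetric_def
    using A B refl sym by blast
qed

lemma sub_refl:
  "mreflexive n h \<Longrightarrow> submultiperm n h g \<Longrightarrow> \<forall>x\<in>{1..n}. x \<in> g x"
  unfolding mreflexive_def submultiperm_def by blast

theorem lemma3p5:
  fixes n m :: nat and f g P :: "nat \<Rightarrow> nat set"
  assumes "blurred n g m P"
    and "multiperm n f"
    and "\<not> mrespects n f m P"
  shows "(let h = mcomp (mcomp f g) (mcomp (minv n g) (minv n f)) in
            multiperm n h \<and> mreflexive n h \<and> msymmetric n h \<and> \<not> submultiperm n h g)
       \<or> (let h = mcomp (mcomp (minv n f) (minv n g)) (mcomp g f) in
            multiperm n h \<and> mreflexive n h \<and> msymmetric n h \<and> \<not> submultiperm n h g)"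
proof -
  have b: "blurred n g m P" and f: "multiperm n f" by fact+
  have g: "multiperm n g" using b unfolding blurred_def by blast
  define h1 where "h1 = mcomp (mcomp f g) (mcomp (minv n g) (minv n f))"
  define h2 where "h2 = mcomp (mcomp (minv n f) (minv n g)) (mcomp g f)"
  have P1: "multiperm n h1 \<and> mreflexive n h1 \<and> msymmetric n h1" unfolding h1_def by (rule h1_props[OF f g])
  have P2: "multiperm n h2 \<and> mreflexive n h2 \<and> msymmetric n h2" unfolding h2_def by (rule h2_props[OF f g])
  show ?thesis
  proof (cases "\<exists>a\<in>{1..n}. \<exists>b\<in>{1..n}. \<exists>c\<in>{1..n}. \<exists>d\<in>{1..n}.
          same_block m P a b \<and> \<not> same_block m P c d \<and> c \<in> f a \<and> d \<in> f b")
    case True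
    then obtain a bb c d where abcd: "a\<in>{1..n}" "bb\<in>{1..n}" "c\<in>{1..n}" "d\<in>{1..n}"
      "same_block m P a bb" "\<not> same_block m P c d" "c \<in> f a" "d \<in> f bb" by blast
    obtain e where e: "e\<in>{1..n}" "a \<in> g e" using mp_props(3)[OF g abcd(1)] by blast
    have "bb \<in> g e"
    proof -
      obtain \<sigma> where s1: "\<forall>i\<in>{1..m}. \<sigma> i \<in> {1..m}" and s2: "\<forall>i\<in>{1..m}. \<forall>x\<in>P i. g x = P (\<sigma> i)"
        using bl_sig[OF b] by blast
      obtain i where i: "i \<in> {1..m}" "e \<in> P i" using bl_blk[OF b e(1)] by blast
      obtain k where k: "k \<in> {1..m}" "a \<in> P k" "bb \<in> P k" using abcd(5) unfolding same_block_def by blast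
      have "g e = P (\<sigma> i)" using s2 i by blast
      moreover have "\<sigma> i = k" using bl_uniq[OF b] s1 i k e(2) calculation by blast
      ultimately show ?thesis using k by simp
    qed
    have "d \<in> h1 c" unfolding h1_def mcomp_def minv_def
      using abcd e \<open>bb \<in> g e\<close> by blast
    have "\<not> submultiperm n h1 g"
    proof
      assume "submultiperm n h1 g"
      hence r: "\<forall>x\<in>{1..n}. x \<in> g x" using sub_refl P1 by blast
      have "d \<in> g c" using \<open>submultiperm n h1 g\<close> \<open>d \<in> h1 c\<close> abcd(3) unfolding submultiperm_def by blast
      thus False using bl_refl_blocks[OF b r abcd(3)] abcd(6) by blast
    qed
    thus ?thesis using P1 unfolding h1_def Let_def by blast
  next
    case False
    then obtain a bb c d where abcd: "a\<in>{1..n}" "bb\<in>{1..n}" "c\<in>{1..n}" "d\<in>{1..n}"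
      "\<not> same_block m P a bb" "same_block m P c d" "c \<in> f a" "d \<in> f bb"
      using assms(3) unfolding mrespects_def by blast
    have gcd: "g c = g d" using bl_same_g[OF b abcd(6)] .
    obtain e where e: "e \<in> g c" using mp_props(1)[OF g abcd(3)] by blast
    have "bb \<in> h2 a" unfolding h2_def mcomp_def minv_def
      using abcd e gcd by blast
    have "\<not> submultiperm n h2 g"
    proof
      assume "submultiperm n h2 g"
      hence r: "\<forall>x\<in>{1..n}. x \<in> g x" using sub_refl P2 by blast
      have "bb \<in> g a" using \<open>submultiperm n h2 g\<close> \<open>bb \<in> h2 a\<close> abcd(1) unfolding submultiperm_def by blast
      thus False using bl_refl_blocks[OF b r abcd(1)] abcd(5) by blast
    qed
    thus ?thesis using P2 unfolding h2_def Let_def by blast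
  qed
qed

end
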